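(* Let $0<t_1<t_2<t_3<t_4<t_5$ be real numbers and let $p_i=(t_i,t_i^2,t_i^3,t_i^4)\in\mathbb{R}^4$ for $1\le i\le 5$. Then the unique $3$-sphere in $\mathbb{R}^4$ passing through $p_1,\dots,p_5$ has the following property: for every $t\in(t_1,t_2)\cup(t_3,t_4)\cup(t_5,\infty)$, the point $(t,t^2,t^3,t^4)$ lies strictly outside the sphere, i.e., its distance from the center of the sphere is strictly greater than the radius.
   Context: The moment curve in $\mathbb{R}^d$ is the curve $t\mapsto(t,t^2,\dots,t^d)$ for $t>0$. A $3$-sphere in $\mathbb{R}^4$ is the set of points at a fixed distance (the radius) from a fixed point (the center). *)

theory Defs
  imports "HOL-Analysis.Analysis"
begin

definition moment_curve4 :: "real \<Rightarrow> real^4" where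
  "moment_curve4 t = vector [t, t^2, t^3, t^4]"

end

theory Submission imports Defs "HOL-Computational_Algebra.Polynomial" begin
lemma mc: "moment_curve4 t $ 1 = t" "moment_curve4 t $ 2 = t^2" "moment_curve4 t $ 3 = t^3" "moment_curve4 t $ 4 = t^4"
  by (simp_all add: moment_curve4_def vector_def eval_nat_numeral)
lemma d2: "(dist c (moment_curve4 t))^2 = t^2+t^4+t^6+t^8 - 2*(c$1*t + c$2*t^2 + c$3*t^3 + c$4*t^4) + (c$1^2+c$2^2+c$3^2+c$4^2)"
  unfolding dist_norm power2_norm_eq_inner inner_vec_def sum_4
  by (simp add: mc power2_eq_square algebra_simps eval_nat_numeral)

lemma vanish5:
  fixes a0 a1 a2 a3 a4 :: real
  assumes "distinct [x1,x2,x3,x4,x5]"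
    and "\<forall>x\<in>{x1,x2,x3,x4,x5}. a0 + a1*x + a2*x^2 + a3*x^3 + a4*x^4 = 0"
  shows "a0 = 0 \<and> a1 = 0 \<and> a2 = 0 \<and> a3 = 0 \<and> a4 = 0"
proof -
  define p where "p = [:a0,a1,a2,a3,a4:]"
  have ev0: "poly p x = a0 + x*(a1 + x*(a2 + x*(a3 + x*a4)))" for x
    by (simp add: p_def)
  have ev: "poly p x = a0 + a1*x + a2*x^2 + a3*x^3 + a4*x^4" for x
    unfolding ev0 by (simp add: algebra_simps power2_eq_square power3_eq_cube power4_eq_xxxx)
  have "p = 0"
  proof (rule ccontr)
    assume nz: "p \<noteq> 0"
    have "degree p \<le> 4" unfolding p_def by (simp add: degree_pCons_le)
    have sub: "{x1,x2,x3,x4,x5} \<subseteq> {x. poly p x = 0}" using assms(2) ev by auto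
    have c5: "card {x1,x2,x3,x4,x5} = 5" using assms(1) by simp
    have "card {x1,x2,x3,x4,x5} \<le> card {x. poly p x = 0}"
      by (rule card_mono[OF poly_roots_finite[OF nz] sub])
    also have "\<dots> \<le> degree p" by (rule card_poly_roots_bound) (use nz in auto)
    finally show False using \<open>degree p \<le> 4\<close> c5 by simp
  qed
  then show ?thesis by (simp add: p_def)
qed

lemma step2: fixes t a f1 f2 :: real
  shows "(t^2 - f1*t + f2)*(t-a) = t^3 - (f1+a)*t^2 + (f2 + a*f1)*t - a*f2"
  by (simp add: algebra_simps eval_nat_numeral)
lemma step3: fixes t a f1 f2 f3 :: real
  shows "(t^3 - f1*t^2 + f2*t - f3)*(t-a) = t^4 - (f1+a)*t^3 + (f2 + a*f1)*t^2 - (f3 + a*f2)*t + a*f3"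
  by (simp add: algebra_simps eval_nat_numeral)
lemma step4:
  fixes t a f1 f2 f3 f4 :: real
  shows "(t^4 - f1*t^3 + f2*t^2 - f3*t + f4)*(t-a) = t^5 - (f1+a)*t^4 + (f2 + a*f1)*t^3 - (f3 + a*f2)*t^2 + (f4 + a*f3)*t - a*f4"
  by (simp add: algebra_simps eval_nat_numeral)
lemma prodid:
  fixes t t1 t2 t3 t4 t5 :: real
  shows "(t-t1)*(t-t2)*(t-t3)*(t-t4)*(t-t5) = t^5 - (t1+t2+t3+t4+t5)*t^4 
     + (t1*t2+t1*t3+t1*t4+t1*t5+t2*t3+t2*t4+t2*t5+t3*t4+t3*t5+t4*t5)*t^3
     - (t1*t2*t3+t1*t2*t4+t1*t2*t5+t1*t3*t4+t1*t3*t5+t1*t4*t5+t2*t3*t4+t2*t3*t5+t2*t4*t5+t3*t4*t5)*t^2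
     + (t1*t2*t3*t4+t1*t2*t3*t5+t1*t2*t4*t5+t1*t3*t4*t5+t2*t3*t4*t5)*t - t1*t2*t3*t4*t5"
proof -
  have "(t-t1)*(t-t2) = t^2 - (t1+t2)*t + t1*t2" by (simp add: algebra_simps power2_eq_square)
  then have "(t-t1)*(t-t2)*(t-t3)*(t-t4)*(t-t5) = (((t^2 - (t1+t2)*t + t1*t2)*(t-t3))*(t-t4))*(t-t5)" by simp
  also note step2 also note step3 also note step4
  finally show ?thesis by (simp add: algebra_simps)
qed

lemma prodgen:
  fixes t e1 e2 e3 e4 e5 b2 b1 b0 :: real
  shows "(t^5 - e1*t^4 + e2*t^3 - e3*t^2 + e4*t - e5) * (t^3 + b2*t^2 + b1*t + b0)
     = t^8 + (b2-e1)*t^7 + (b1 - e1*b2 + e2)*t^6 + (b0 - e1*b1 + e2*b2 - e3)*t^5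
       + (-e1*b0 + e2*b1 - e3*b2 + e4)*t^4 + (e2*b0 - e3*b1 + e4*b2 - e5)*t^3
       + (-e3*b0 + e4*b1 - e5*b2)*t^2 + (e4*b0 - e5*b1)*t + (-e5*b0)"
  by (simp add: algebra_simps eval_nat_numeral)

lemma signprod:
  fixes t t1 t2 t3 t4 t5 :: real
  assumes "t1 < t2" "t2 < t3" "t3 < t4" "t4 < t5"
    and "t \<in> {t1<..<t2} \<union> {t3<..<t4} \<union> {t5<..}"
  shows "(t-t1)*(t-t2)*(t-t3)*(t-t4)*(t-t5) > 0"
proof -
  consider "t1 < t" "t < t2" | "t3 < t" "t < t4" | "t5 < t" using assms(5) by auto
  then show ?thesis
  proof cases
    case 1
    have "(t-t1)*(t-t2) < 0" using 1 by (intro mult_pos_neg) auto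
    then have "(t-t1)*(t-t2)*(t-t3) > 0" using 1 assms by (intro mult_neg_neg) auto
    then have "(t-t1)*(t-t2)*(t-t3)*(t-t4) < 0" using 1 assms by (intro mult_pos_neg) auto
    then show ?thesis using 1 assms by (intro mult_neg_neg) auto
  next
    case 2
    have "(t-t1)*(t-t2)*(t-t3) > 0" using 2 assms by (intro mult_pos_pos) auto
    then have "(t-t1)*(t-t2)*(t-t3)*(t-t4) < 0" using 2 assms by (intro mult_pos_neg) auto
    then show ?thesis using 2 assms by (intro mult_neg_neg) auto
  next
    case 3
    then show ?thesis using assms by (intro mult_pos_pos) auto
  qed
qed

lemma comb:
  fixes x r S c1 c2 c3 c4 q0 q1 q2 q3 q4 :: real
  assumes "r^2 = x^2+x^4+x^6+x^8 - 2*(c1*x + c2*x^2 + c3*x^3 + c4*x^4) + S"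
    and "0 = x^8 + x^6 + q4*x^4 + q3*x^3 + q2*x^2 + q1*x + q0"
  shows "(S - r^2 - q0) + (-2*c1 - q1)*x + (1 - 2*c2 - q2)*x^2 + (-2*c3-q3)*x^3 + (1-2*c4-q4)*x^4 = 0"
  using assms by (simp add: algebra_simps)

lemma comb2:
  fixes x d S q0 q1 q2 q3 q4 :: real
  assumes "d = x^2+x^4+x^6+x^8 - 2*((-q1/2)*x + ((1-q2)/2)*x^2 + (-q3/2)*x^3 + ((1-q4)/2)*x^4) + S"
  shows "d - (S - q0) = x^8 + x^6 + q4*x^4 + q3*x^3 + q2*x^2 + q1*x + q0"
proof -
  have "2*((-q1/2)*x + ((1-q2)/2)*x^2 + (-q3/2)*x^3 + ((1-q4)/2)*x^4) = -q1*x + x^2 - q2*x^2 - q3*x^3 + x^4 - q4*x^4"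
    by (simp add: field_simps)
  then show ?thesis using assms by linarith
qed

theorem mainTheorem6:
  fixes t1 t2 t3 t4 t5 :: real
  assumes "0 < t1" "t1 < t2" "t2 < t3" "t3 < t4" "t4 < t5"
  defines "P \<equiv> {moment_curve4 t1, moment_curve4 t2, moment_curve4 t3,
                  moment_curve4 t4, moment_curve4 t5}"
  shows "(\<exists>!(c, r). r > 0 \<and> P \<subseteq> sphere c r) \<and>
         (\<forall>c r. r > 0 \<and> P \<subseteq> sphere c r \<longrightarrow>
            (\<forall>t \<in> {t1<..<t2} \<union> {t3<..<t4} \<union> {t5<..}.
               dist c (moment_curve4 t) > r))"
proof -
  define e1 where "e1 = t1+t2+t3+t4+t5"
  define e2 where "e2 = t1*t2+t1*t3+t1*t4+t1*t5+t2*t3+t2*t4+t2*t5+t3*t4+t3*t5+t4*t5"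
  define e3 where "e3 = t1*t2*t3+t1*t2*t4+t1*t2*t5+t1*t3*t4+t1*t3*t5+t1*t4*t5+t2*t3*t4+t2*t3*t5+t2*t4*t5+t3*t4*t5"
  define e4 where "e4 = t1*t2*t3*t4+t1*t2*t3*t5+t1*t2*t4*t5+t1*t3*t4*t5+t2*t3*t4*t5"
  define e5 where "e5 = t1*t2*t3*t4*t5"
  define b1 where "b1 = 1 + e1*e1 - e2"
  define b0 where "b0 = e1*b1 - e2*e1 + e3"
  define q4 where "q4 = -e1*b0 + e2*b1 - e3*e1 + e4"
  define q3 where "q3 = e2*b0 - e3*b1 + e4*e1 - e5"
  define q2 where "q2 = -e3*b0 + e4*b1 - e5*e1"
  define q1 where "q1 = e4*b0 - e5*b1"
  define q0 where "q0 = -e5*b0"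
  define g where "g = (\<lambda>t::real. t^3 + e1*t^2 + b1*t + b0)"
  define pp where "pp = (\<lambda>t::real. (t-t1)*(t-t2)*(t-t3)*(t-t4)*(t-t5))"
  have key: "pp t * g t = t^8 + t^6 + q4*t^4 + q3*t^3 + q2*t^2 + q1*t + q0" for t
  proof -
    have "pp t = t^5 - e1*t^4 + e2*t^3 - e3*t^2 + e4*t - e5"
      unfolding pp_def prodid e1_def e2_def e3_def e4_def e5_def by simp
    then have "pp t * g t = t^8 + (e1-e1)*t^7 + (b1 - e1*e1 + e2)*t^6 + (b0 - e1*b1 + e2*e1 - e3)*t^5
       + (-e1*b0 + e2*b1 - e3*e1 + e4)*t^4 + (e2*b0 - e3*b1 + e4*e1 - e5)*t^3
       + (-e3*b0 + e4*b1 - e5*e1)*t^2 + (e4*b0 - e5*b1)*t + (-e5*b0)"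
      unfolding g_def by (simp only: prodgen)
    also have "\<dots> = t^8 + t^6 + q4*t^4 + q3*t^3 + q2*t^2 + q1*t + q0"
      unfolding q4_def q3_def q2_def q1_def q0_def b0_def b1_def by simp
    finally show ?thesis .
  qed
  have "e1 > 0" unfolding e1_def using assms by linarith
  have sq: "e1*e1 - 2*e2 = t1^2+t2^2+t3^2+t4^2+t5^2"
    unfolding e1_def e2_def by (simp add: algebra_simps power2_eq_square)
  have "e2 > 0" unfolding e2_def using assms by (simp add: add_pos_pos)
  have "e3 > 0" unfolding e3_def using assms by (simp add: add_pos_pos)
  have "t1^2+t2^2+t3^2+t4^2+t5^2 \<ge> 0" by simp
  then have "b1 > 0" unfolding b1_def using sq \<open>e2 > 0\<close> by linarith
  have "b0 = e1 * (1 + (e1*e1 - 2*e2)) + e3" unfolding b0_def b1_def by (simp add: algebra_simps)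
  moreover have "1 + (e1*e1 - 2*e2) > 0" using sq \<open>t1^2+t2^2+t3^2+t4^2+t5^2 \<ge> 0\<close> by linarith
  ultimately have "b0 > 0" using \<open>e1 > 0\<close> \<open>e3 > 0\<close> by (simp add: add_pos_pos)
  have gpos: "g t > 0" if "t > 0" for t
    unfolding g_def using that \<open>e1 > 0\<close> \<open>b1 > 0\<close> \<open>b0 > 0\<close> by (simp add: add_pos_pos)
  define S where "S = (\<lambda>c::real^4. c$1^2+c$2^2+c$3^2+c$4^2)"
  have P0: "pp x = 0" if "x \<in> {t1,t2,t3,t4,t5}" for x
    using that unfolding pp_def by auto
  have char: "c$1 = -q1/2 \<and> c$2 = (1-q2)/2 \<and> c$3 = -q3/2 \<and> c$4 = (1-q4)/2 \<and> r^2 = S c - q0"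
    if "r > 0" "P \<subseteq> sphere c r" for c r
  proof -
    have "\<forall>x\<in>{t1,t2,t3,t4,t5}. (S c - r^2 - q0) + (-2*c$1 - q1)*x + (1 - 2*c$2 - q2)*x^2 + (-2*c$3-q3)*x^3 + (1-2*c$4-q4)*x^4 = 0"
    proof
      fix x assume x: "x \<in> {t1,t2,t3,t4,t5}"
      then have "dist c (moment_curve4 x) = r" using that(2) unfolding P_def by auto
      then have h1: "r^2 = x^2+x^4+x^6+x^8 - 2*(c$1*x + c$2*x^2 + c$3*x^3 + c$4*x^4) + S c"
        using d2[of c x] unfolding S_def by simp
      have h2: "0 = x^8 + x^6 + q4*x^4 + q3*x^3 + q2*x^2 + q1*x + q0"
        using key[of x] P0[OF x] by simp
      show "(S c - r^2 - q0) + (-2*c$1 - q1)*x + (1 - 2*c$2 - q2)*x^2 + (-2*c$3-q3)*x^3 + (1-2*c$4-q4)*x^4 = 0"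
        by (rule comb[OF h1 h2])
    qed
    moreover have "distinct [t1,t2,t3,t4,t5]" using assms by auto
    ultimately have "S c - r^2 - q0 = 0 \<and> -2*c$1 - q1 = 0 \<and> 1 - 2*c$2 - q2 = 0 \<and> -2*c$3-q3 = 0 \<and> 1-2*c$4-q4 = 0"
      using vanish5 by blast
    then show ?thesis by auto
  qed
  define c0 :: "real^4" where "c0 = vector [-q1/2, (1-q2)/2, -q3/2, (1-q4)/2]"
  have c0c: "c0$1 = -q1/2" "c0$2 = (1-q2)/2" "c0$3 = -q3/2" "c0$4 = (1-q4)/2"
    by (simp_all add: c0_def vector_def)
  have dc0: "(dist c0 (moment_curve4 x))^2 = S c0 - q0" if "x \<in> {t1,t2,t3,t4,t5}" for x
  proof -
    have h2: "0 = x^8 + x^6 + q4*x^4 + q3*x^3 + q2*x^2 + q1*x + q0"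
      using key[of x] P0[OF that] by simp
    have "(dist c0 (moment_curve4 x))^2 = x^2+x^4+x^6+x^8 - 2*((-q1/2)*x + ((1-q2)/2)*x^2 + (-q3/2)*x^3 + ((1-q4)/2)*x^4) + S c0"
      unfolding d2 S_def c0c by simp
    from comb2[OF this, of q0] h2 show ?thesis by linarith
  qed
  define r0 where "r0 = sqrt (S c0 - q0)"
  have dr0: "dist c0 (moment_curve4 x) = r0" if "x \<in> {t1,t2,t3,t4,t5}" for x
    unfolding r0_def using dc0[OF that] by (metis zero_le_dist real_sqrt_unique)
  have nn: "S c0 - q0 \<ge> 0" using dc0[of t1] by (metis insertI1 zero_le_power2)
  have "r0 > 0"
  proof (rule ccontr)
    assume "\<not> r0 > 0"
    with nn have "r0 = 0" unfolding r0_def by simp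
    then have "moment_curve4 t1 = c0" "moment_curve4 t2 = c0" using dr0 by auto
    then have "moment_curve4 t1 $ 1 = moment_curve4 t2 $ 1" by simp
    then show False using mc assms by simp
  qed
  have ex: "r0 > 0 \<and> P \<subseteq> sphere c0 r0"
    using \<open>r0 > 0\<close> dr0 unfolding P_def by auto
  have part1: "\<exists>!(c, r). r > 0 \<and> P \<subseteq> sphere c r"
  proof (rule ex1I[where a="(c0, r0)"])
    show "case (c0, r0) of (c, r) \<Rightarrow> r > 0 \<and> P \<subseteq> sphere c r" using ex by simp
  next
    fix y assume y: "case y of (c, r) \<Rightarrow> r > 0 \<and> P \<subseteq> sphere c r"
    obtain c r where yy: "y = (c, r)" by (cases y)
    with y have cr: "r > 0" "P \<subseteq> sphere c r" by auto
    from char[OF cr] have cc: "c$1 = c0$1" "c$2 = c0$2" "c$3 = c0$3" "c$4 = c0$4" and r2: "r^2 = S c - q0"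
      using c0c by auto
    have "c = c0" unfolding vec_eq_iff forall_4 using cc by simp
    then have "r^2 = r0^2" using r2 nn unfolding r0_def by simp
    then have "r = r0" using cr(1) \<open>r0 > 0\<close> by (simp add: power2_eq_iff)
    with \<open>c = c0\<close> show "y = (c0, r0)" using yy by simp
  qed
  have part2: "dist c (moment_curve4 t) > r"
    if "r > 0 \<and> P \<subseteq> sphere c r" "t \<in> {t1<..<t2} \<union> {t3<..<t4} \<union> {t5<..}" for c r t
  proof -
    from char[of r c] that(1) have cc: "c$1 = -q1/2" "c$2 = (1-q2)/2" "c$3 = -q3/2" "c$4 = (1-q4)/2"
      and r2: "r^2 = S c - q0" by auto
    have "t > 0" using that(2) assms by auto
    have "pp t > 0" unfolding pp_def using signprod[OF assms(2-5) that(2)] by simp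
    then have pos: "pp t * g t > 0" using gpos[OF \<open>t > 0\<close>] by simp
    have "(dist c (moment_curve4 t))^2 = t^2+t^4+t^6+t^8 - 2*((-q1/2)*t + ((1-q2)/2)*t^2 + (-q3/2)*t^3 + ((1-q4)/2)*t^4) + S c"
      unfolding d2 S_def cc by simp
    from comb2[OF this, of q0] have "(dist c (moment_curve4 t))^2 - r^2 = pp t * g t"
      unfolding key r2 by simp
    then have "(dist c (moment_curve4 t))^2 > r^2" using pos by simp
    then show ?thesis using that(1) by (meson zero_le_dist power_less_imp_less_base)
  qed
  show ?thesis using part1 part2 by blast
qed
end
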